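(* Let $n\ge 2$. No smooth Frobenius nonclassical hypersurface $X\subset\mathbb{P}^n$ over $\mathbb{F}_q$ of degree $q+2$ has separated variables.
   Context: A hypersurface $X=\{F=0\}\subset\mathbb{P}^n$ over $\mathbb{F}_q$ ($F$ homogeneous) is Frobenius nonclassical if $F$ divides $\sum_{i=0}^n x_i^q\frac{\partial F}{\partial x_i}$. $X$ has separated variables if, after a projective linear change of coordinates over $\mathbb{F}_q$, $F=G(x_0,\dots,x_m)+H(x_{m+1},\dots,x_n)$ for some $m\in\{0,\dots,n-1\}$. *)

theory Defs
  imports "HOL-Library.Poly_Mapping" "HOL-Algebra.Algebraic_Closure_Type"
begin

text \<open>Multivariate polynomials over 'k in the variables x_0, x_1, ...:
  finitely supported maps from monomials (exponent vectors) to coefficients.\<close>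
type_synonym 'k mpoly = "(nat \<Rightarrow>\<^sub>0 nat) \<Rightarrow>\<^sub>0 'k"

definition mp_const :: "'k::zero \<Rightarrow> 'k mpoly" where
  "mp_const c = Poly_Mapping.single 0 c"

definition mp_var :: "nat \<Rightarrow> 'k::{zero,one} mpoly" where
  "mp_var i = Poly_Mapping.single (Poly_Mapping.single i 1) 1"

definition mon_deg :: "(nat \<Rightarrow>\<^sub>0 nat) \<Rightarrow> nat" where
  "mon_deg m = (\<Sum>i\<in>Poly_Mapping.keys m. Poly_Mapping.lookup m i)"

definition vars_in :: "nat set \<Rightarrow> 'k::zero mpoly \<Rightarrow> bool" where
  "vars_in V F \<longleftrightarrow> (\<forall>m\<in>Poly_Mapping.keys F. Poly_Mapping.keys m \<subseteq> V)"

definition homogeneous :: "nat \<Rightarrow> 'k::zero mpoly \<Rightarrow> bool" where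
  "homogeneous d F \<longleftrightarrow> (\<forall>m\<in>Poly_Mapping.keys F. mon_deg m = d)"

definition mp_pderiv :: "nat \<Rightarrow> 'k::comm_ring_1 mpoly \<Rightarrow> 'k mpoly" where
  "mp_pderiv i F = (\<Sum>m\<in>Poly_Mapping.keys F.
      Poly_Mapping.single (m - Poly_Mapping.single i 1) (of_nat (Poly_Mapping.lookup m i) * Poly_Mapping.lookup F m))"

definition mp_eval :: "('k::zero \<Rightarrow> 'b::comm_ring_1) \<Rightarrow> (nat \<Rightarrow> 'b) \<Rightarrow> 'k mpoly \<Rightarrow> 'b" where
  "mp_eval h x F = (\<Sum>m\<in>Poly_Mapping.keys F. h (Poly_Mapping.lookup F m) * (\<Prod>i\<in>Poly_Mapping.keys m. x i ^ Poly_Mapping.lookup m i))"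

definition mp_subst :: "(nat \<Rightarrow> 'k::comm_ring_1 mpoly) \<Rightarrow> 'k mpoly \<Rightarrow> 'k mpoly" where
  "mp_subst \<sigma> F = (\<Sum>m\<in>Poly_Mapping.keys F. mp_const (Poly_Mapping.lookup F m) * (\<Prod>i\<in>Poly_Mapping.keys m. \<sigma> i ^ Poly_Mapping.lookup m i))"

definition frobenius_nonclassical :: "nat \<Rightarrow> 'k::{finite,field} mpoly \<Rightarrow> bool" where
  "frobenius_nonclassical n F \<longleftrightarrow>
     F dvd (\<Sum>i\<le>n. mp_var i ^ card (UNIV :: 'k set) * mp_pderiv i F)"

definition smooth_hypersurface :: "nat \<Rightarrow> 'k::field mpoly \<Rightarrow> bool" where
  "smooth_hypersurface n F \<longleftrightarrow>
     (\<forall>x :: nat \<Rightarrow> 'k alg_closure. (\<exists>i\<le>n. x i \<noteq> 0) \<longrightarrow>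
        \<not> (mp_eval to_ac x F = 0 \<and> (\<forall>i\<le>n. mp_eval to_ac x (mp_pderiv i F) = 0)))"

definition invertible_mat :: "nat \<Rightarrow> (nat \<Rightarrow> nat \<Rightarrow> 'k::field) \<Rightarrow> bool" where
  "invertible_mat n A \<longleftrightarrow> (\<exists>B. \<forall>i\<le>n. \<forall>k\<le>n.
      (\<Sum>j\<le>n. A i j * B j k) = (if i = k then 1 else 0))"

definition lin_change :: "nat \<Rightarrow> (nat \<Rightarrow> nat \<Rightarrow> 'k::field) \<Rightarrow> 'k mpoly \<Rightarrow> 'k mpoly" where
  "lin_change n A F = mp_subst (\<lambda>i. \<Sum>j\<le>n. mp_const (A i j) * mp_var j) F"

definition separated_variables :: "nat \<Rightarrow> 'k::field mpoly \<Rightarrow> bool" where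
  "separated_variables n F \<longleftrightarrow>
     (\<exists>A m G H. invertible_mat n A \<and> m < n \<and>
        vars_in {..m} G \<and> vars_in {m<..n} H \<and> lin_change n A F = G + H)"

end

theory Submission
  imports Defs "HOL-Computational_Algebra.Polynomial" "Jordan_Normal_Form.Determinant"
begin

abbreviation lk where "lk \<equiv> Poly_Mapping.lookup"
abbreviation ks where "ks \<equiv> Poly_Mapping.keys"
abbreviation sg where "sg \<equiv> Poly_Mapping.single"

lemma pm_expand:
  fixes F :: "'a \<Rightarrow>\<^sub>0 'b::comm_monoid_add"
  shows "F = (\<Sum>m\<in>ks F. sg m (lk F m))"
proof (rule poly_mapping_eqI)
  fix k
  have "lk (\<Sum>m\<in>ks F. sg m (lk F m)) k = (\<Sum>m\<in>ks F. (lk F m when m = k))"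
    by (simp add: lookup_sum lookup_single)
  also have "\<dots> = lk F k"
  proof (cases "k \<in> ks F")
    case True
    then show ?thesis by (simp add: when_def sum.delta)
  next
    case False
    then have "\<And>m. m \<in> ks F \<Longrightarrow> (lk F m when m = k) = 0" by (auto simp: when_def)
    then show ?thesis using False by (simp add: in_keys_iff)
  qed
  finally show "lk F k = lk (\<Sum>m\<in>ks F. sg m (lk F m)) k" by simp
qed

definition mon :: "(nat \<Rightarrow> 'b::comm_monoid_mult) \<Rightarrow> (nat \<Rightarrow>\<^sub>0 nat) \<Rightarrow> 'b" where
  "mon x m = (\<Prod>i\<in>ks m. x i ^ lk m i)"

lemma mon_superset:
  assumes "finite S" "ks m \<subseteq> S"
  shows "mon x m = (\<Prod>i\<in>S. x i ^ lk m i)"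
  unfolding mon_def
  by (rule prod.mono_neutral_left) (use assms in \<open>auto simp: in_keys_iff\<close>)

lemma mon_add: "mon x (a + b) = mon x a * mon x b"
proof -
  let ?S = "ks a \<union> ks b"
  have "mon x (a + b) = (\<Prod>i\<in>?S. x i ^ lk (a + b) i)"
    by (rule mon_superset) (use keys_add[of a b] in auto)
  also have "\<dots> = (\<Prod>i\<in>?S. x i ^ lk a i) * (\<Prod>i\<in>?S. x i ^ lk b i)"
    by (simp add: lookup_add power_add prod.distrib)
  also have "\<dots> = mon x a * mon x b"
    by (subst (1 2) mon_superset[of ?S]) auto
  finally show ?thesis .
qed

lemma mon_zero [simp]: "mon x 0 = 1"
  by (simp add: mon_def)

lemma mon_single [simp]: "mon x (sg i k) = x i ^ k"
  by (simp add: mon_def)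

definition ev :: "('k::zero \<Rightarrow> 'b::comm_ring_1) \<Rightarrow> (nat \<Rightarrow> 'b) \<Rightarrow> 'k mpoly \<Rightarrow> 'b" where
  "ev h x F = (\<Sum>m\<in>ks F. h (lk F m) * mon x m)"

lemma mp_eval_ev: "mp_eval h x F = ev h x F"
  by (simp add: mp_eval_def ev_def mon_def)

lemma mp_subst_ev: "mp_subst \<sigma> F = ev mp_const \<sigma> F"
  by (simp add: mp_subst_def ev_def mon_def)

locale hm =
  fixes h :: "'k::comm_ring_1 \<Rightarrow> 'b::comm_ring_1"
  assumes h0: "h 0 = 0" and hadd: "\<And>a b. h (a + b) = h a + h b"
    and hmul: "\<And>a b. h (a * b) = h a * h b" and h1: "h 1 = 1"
begin

lemma ev_superset:
  assumes "finite S" "ks F \<subseteq> S"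
  shows "ev h x F = (\<Sum>m\<in>S. h (lk F m) * mon x m)"
  unfolding ev_def
  by (rule sum.mono_neutral_left) (use assms in \<open>auto simp: in_keys_iff h0\<close>)

lemma ev_add: "ev h x (F + G) = ev h x F + ev h x G"
proof -
  let ?S = "ks F \<union> ks G"
  have "ev h x (F + G) = (\<Sum>m\<in>?S. h (lk (F + G) m) * mon x m)"
    by (rule ev_superset) (use keys_add[of F G] in auto)
  also have "\<dots> = (\<Sum>m\<in>?S. h (lk F m) * mon x m) + (\<Sum>m\<in>?S. h (lk G m) * mon x m)"
    by (simp add: lookup_add hadd distrib_right sum.distrib)
  also have "\<dots> = ev h x F + ev h x G"
    by (subst (1 2) ev_superset[of ?S]) auto
  finally show ?thesis .
qed

lemma ev_zero [simp]: "ev h x 0 = 0"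
  by (simp add: ev_def)

lemma ev_sum: "ev h x (\<Sum>a\<in>A. f a) = (\<Sum>a\<in>A. ev h x (f a))"
  by (induction A rule: infinite_finite_induct) (auto simp: ev_add)

lemma ev_single: "ev h x (sg m c) = h c * mon x m"
  by (cases "c = 0") (auto simp: ev_def h0)

lemma mult_expand:
  fixes F G :: "'k mpoly"
  shows "F * G = (\<Sum>a\<in>ks F. \<Sum>b\<in>ks G. sg (a + b) (lk F a * lk G b))"
proof -
  have "F * G = (\<Sum>a\<in>ks F. sg a (lk F a)) * (\<Sum>b\<in>ks G. sg b (lk G b))"
    by (subst (1) pm_expand[of F], subst (1) pm_expand[of G]) simp
  also have "\<dots> = (\<Sum>a\<in>ks F. \<Sum>b\<in>ks G. sg a (lk F a) * sg b (lk G b))"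
    by (simp add: sum_product)
  finally show ?thesis by (simp add: mult_single)
qed

lemma ev_mult: "ev h x (F * G) = ev h x F * ev h x G"
proof -
  have "ev h x (F * G) = (\<Sum>a\<in>ks F. \<Sum>b\<in>ks G. h (lk F a) * mon x a * (h (lk G b) * mon x b))"
    by (subst mult_expand) (simp add: ev_sum ev_single hmul mon_add mult_ac)
  also have "\<dots> = ev h x F * ev h x G"
    by (simp add: ev_def sum_product)
  finally show ?thesis .
qed

lemma ev_one [simp]: "ev h x 1 = 1"
  using ev_single[where m=0 and c=1 and x=x] by (simp add: h1)

lemma ev_prod: "ev h x (\<Prod>a\<in>A. f a) = (\<Prod>a\<in>A. ev h x (f a))"
  by (induction A rule: infinite_finite_induct) (auto simp: ev_mult)

lemma ev_power: "ev h x (F ^ k) = ev h x F ^ k"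
  by (induction k) (auto simp: ev_mult)

lemma ev_const: "ev h x (mp_const c) = h c"
  by (simp add: mp_const_def ev_single)

lemma ev_var: "ev h x (mp_var i) = x i"
  by (simp add: mp_var_def ev_single h1)

lemma ev_mon: "ev h x (mon \<sigma> m) = mon (\<lambda>i. ev h x (\<sigma> i)) m"
  by (simp add: mon_def ev_prod ev_power)

end

lemma const_add: "mp_const (a + b) = mp_const a + mp_const b"
  by (simp add: mp_const_def single_add)
lemma const_mult: "mp_const (a * b) = (mp_const a * mp_const b :: 'k::comm_ring_1 mpoly)"
  by (simp add: mp_const_def mult_single)
lemma const_zero [simp]: "mp_const 0 = 0"
  by (simp add: mp_const_def)
lemma const_one [simp]: "mp_const 1 = (1 :: 'k::comm_ring_1 mpoly)"
  by (simp add: mp_const_def)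

interpretation cst: hm "mp_const :: 'k::comm_ring_1 \<Rightarrow> 'k mpoly"
  by unfold_locales (auto simp: const_add const_mult)

lemma ev_const_single: "ev mp_const x (sg m c) = mp_const c * mon x m"
  by (rule cst.ev_single)

lemma var_power: "mp_var i ^ k = (sg (sg i k) 1 :: 'k::comm_ring_1 mpoly)"
proof (induction k)
  case 0 then show ?case by simp
next
  case (Suc k)
  then show ?case by (simp add: mp_var_def mult_single single_add[symmetric] mult.commute)
qed

lemma prod_single1:
  "(\<Prod>i\<in>A. sg (f i) (1::'k::comm_ring_1)) = sg (\<Sum>i\<in>A. f i) 1"
  by (induction A rule: infinite_finite_induct) (auto simp: mult_single)

lemma mon_var: "mon mp_var m = (sg m 1 :: 'k::comm_ring_1 mpoly)"
proof -
  have "mon mp_var m = (\<Prod>i\<in>ks m. (sg (sg i (lk m i)) 1 :: 'k mpoly))"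
    by (simp add: mon_def var_power)
  also have "\<dots> = sg (\<Sum>i\<in>ks m. sg i (lk m i)) 1" by (rule prod_single1)
  also have "(\<Sum>i\<in>ks m. sg i (lk m i)) = m" by (rule pm_expand[symmetric])
  finally show ?thesis .
qed

lemma const_mon_var: "mp_const c * mon mp_var m = (sg m c :: 'k::comm_ring_1 mpoly)"
  by (simp add: mon_var mp_const_def mult_single)

lemma ev_var_id: "ev mp_const mp_var F = (F :: 'k::comm_ring_1 mpoly)"
proof -
  have "ev mp_const mp_var F = (\<Sum>m\<in>ks F. sg m (lk F m))"
    by (simp add: ev_def const_mon_var)
  then show ?thesis using pm_expand[of F] by simp
qed

lemma minus_single_add:
  assumes "lk m i > 0"
  shows "(m - sg i 1) + b = (m + b) - sg i (1::nat)"
  by (rule poly_mapping_eqI) (use assms in \<open>auto simp: lookup_add lookup_minus lookup_single when_def\<close>)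

lemma minus_single_plus:
  assumes "lk m i > 0"
  shows "(m - sg i 1) + sg i 1 = (m :: nat \<Rightarrow>\<^sub>0 nat)"
  by (rule poly_mapping_eqI) (use assms in \<open>auto simp: lookup_add lookup_minus lookup_single when_def\<close>)

lemma lookup_pd:
  fixes F :: "'k::comm_ring_1 mpoly"
  shows "lk (mp_pderiv i F) u = of_nat (lk u i + 1) * lk F (u + sg i 1)"
proof -
  have "lk (mp_pderiv i F) u = (\<Sum>m\<in>ks F. (of_nat (lk m i) * lk F m when m - sg i 1 = u))"
    by (simp add: mp_pderiv_def lookup_sum lookup_single)
  also have "\<dots> = (\<Sum>m\<in>ks F. (if m = u + sg i 1 then of_nat (lk m i) * lk F m else 0))"
  proof (rule sum.cong[OF refl])
    fix m
    show "(of_nat (lk m i) * lk F m when m - sg i 1 = u) =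
          (if m = u + sg i 1 then of_nat (lk m i) * lk F m else 0)"
    proof (cases "lk m i = 0")
      case True
      then have "m \<noteq> u + sg i 1" by (auto simp: lookup_add)
      then show ?thesis using True by (simp add: when_def)
    next
      case False
      then have "m - sg i 1 = u \<longleftrightarrow> m = u + sg i 1"
        using minus_single_plus[of m i] by auto
      then show ?thesis by (simp add: when_def)
    qed
  qed
  also have "\<dots> = of_nat (lk u i + 1) * lk F (u + sg i 1)"
    by (cases "u + sg i 1 \<in> ks F") (auto simp: sum.delta in_keys_iff lookup_add)
  finally show ?thesis .
qed

lemma pd_add: "mp_pderiv i (F + G) = mp_pderiv i F + mp_pderiv i (G :: 'k::comm_ring_1 mpoly)"
  by (rule poly_mapping_eqI) (simp add: lookup_pd lookup_add distrib_left)

lemma pd_sum: "mp_pderiv i (\<Sum>a\<in>A. f a) = (\<Sum>a\<in>A. mp_pderiv i (f a :: 'k::comm_ring_1 mpoly))"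
  by (rule poly_mapping_eqI) (simp add: lookup_pd lookup_sum sum_distrib_left)

lemma pd_zero [simp]: "mp_pderiv i (0 :: 'k::comm_ring_1 mpoly) = 0"
  by (simp add: mp_pderiv_def)

lemma pd_single: "mp_pderiv i (sg m c) = sg (m - sg i 1) (of_nat (lk m i) * (c::'k::comm_ring_1))"
  by (cases "c = 0") (auto simp: mp_pderiv_def)

lemma pd_mono_mult:
  "mp_pderiv i (sg a (c::'k::comm_ring_1) * sg b d) =
     mp_pderiv i (sg a c) * sg b d + sg a c * mp_pderiv i (sg b d)"
proof -
  have e1: "sg (a - sg i 1 + b) (of_nat (lk a i) * c * d) = sg (a + b - sg i 1) (of_nat (lk a i) * c * d)"
    using minus_single_add[of a i b] by (cases "lk a i = 0") auto
  have e2: "sg (a + (b - sg i 1)) (c * (of_nat (lk b i) * d)) = sg (a + b - sg i 1) (of_nat (lk b i) * c * d)"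
    using minus_single_add[of b i a] by (cases "lk b i = 0") (auto simp: add.commute mult_ac)
  have "mp_pderiv i (sg a c) * sg b d + sg a c * mp_pderiv i (sg b d) =
     sg (a - sg i 1 + b) (of_nat (lk a i) * c * d) + sg (a + (b - sg i 1)) (c * (of_nat (lk b i) * d))"
    by (simp only: pd_single mult_single)
  also have "\<dots> = sg (a + b - sg i 1) (of_nat (lk a i) * c * d + of_nat (lk b i) * c * d)"
    by (simp only: e1 e2 single_add)
  also have "\<dots> = mp_pderiv i (sg a c * sg b d)"
    by (simp add: pd_single mult_single lookup_add algebra_simps)
  finally show ?thesis by simp
qed

lemma pd_mult: "mp_pderiv i (F * G) = mp_pderiv i F * G + F * mp_pderiv i (G :: 'k::comm_ring_1 mpoly)"
proof -
  have "F * G = (\<Sum>a\<in>ks F. \<Sum>b\<in>ks G. sg a (lk F a) * sg b (lk G b))"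
    by (subst (1) pm_expand[of F], subst (1) pm_expand[of G]) (simp add: sum_product)
  then have "mp_pderiv i (F * G) = (\<Sum>a\<in>ks F. \<Sum>b\<in>ks G.
       mp_pderiv i (sg a (lk F a)) * sg b (lk G b) + sg a (lk F a) * mp_pderiv i (sg b (lk G b)))"
    by (simp add: pd_sum pd_mono_mult)
  also have "\<dots> = mp_pderiv i (\<Sum>a\<in>ks F. sg a (lk F a)) * (\<Sum>b\<in>ks G. sg b (lk G b))
      + (\<Sum>a\<in>ks F. sg a (lk F a)) * mp_pderiv i (\<Sum>b\<in>ks G. sg b (lk G b))"
    by (simp add: pd_sum sum.distrib sum_product)
  finally show ?thesis using pm_expand[of F] pm_expand[of G] by simp
qed

lemma pd_const [simp]: "mp_pderiv i (mp_const c) = (0 :: 'k::comm_ring_1 mpoly)"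
  by (simp add: mp_const_def pd_single)

lemma pd_one [simp]: "mp_pderiv i (1 :: 'k::comm_ring_1 mpoly) = 0"
  using pd_const[of i 1] by simp

lemma pd_var: "mp_pderiv i (mp_var j) = (if i = j then 1 else (0 :: 'k::comm_ring_1 mpoly))"
  by (auto simp: mp_var_def pd_single lookup_single)

lemma pd_const_mult: "mp_pderiv i (mp_const c * P) = mp_const c * mp_pderiv i (P :: 'k::comm_ring_1 mpoly)"
  by (simp add: pd_mult)

lemma pd_prod: "mp_pderiv i (\<Prod>a\<in>A. f a) =
   (\<Sum>a\<in>A. mp_pderiv i (f a) * (\<Prod>b\<in>A-{a}. f b :: 'k::comm_ring_1 mpoly))"
proof (induction A rule: infinite_finite_induct)
  case (insert x F)
  have "mp_pderiv i (\<Prod>a\<in>insert x F. f a) = mp_pderiv i (f x) * (\<Prod>a\<in>F. f a) + f x * mp_pderiv i (\<Prod>a\<in>F. f a)"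
    using insert by (simp add: pd_mult)
  also have "\<dots> = (\<Sum>a\<in>insert x F. mp_pderiv i (f a) * (\<Prod>b\<in>insert x F-{a}. f b))"
    using insert
    apply (simp add: sum_distrib_left)
    apply (rule sum.cong[OF refl])
    apply (subgoal_tac "insert x F - {xa} = insert x (F - {xa})")
     apply (auto simp: mult_ac)
    done
  finally show ?case .
qed auto

definition CR :: "nat \<Rightarrow> nat set \<Rightarrow> (nat \<Rightarrow> 'k::comm_ring_1 mpoly) \<Rightarrow> 'k mpoly \<Rightarrow> bool" where
  "CR j I \<sigma> P \<longleftrightarrow> mp_pderiv j (ev mp_const \<sigma> P) =
     (\<Sum>i\<in>I. ev mp_const \<sigma> (mp_pderiv i P) * mp_pderiv j (\<sigma> i))"

lemma CR_add: "CR j I \<sigma> P \<Longrightarrow> CR j I \<sigma> Q \<Longrightarrow> CR j I \<sigma> (P + Q)"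
  by (simp add: CR_def cst.ev_add pd_add distrib_right sum.distrib)

lemma CR_mult: "CR j I \<sigma> P \<Longrightarrow> CR j I \<sigma> Q \<Longrightarrow> CR j I \<sigma> (P * Q)"
  by (simp add: CR_def cst.ev_add cst.ev_mult pd_mult pd_add distrib_right distrib_left sum.distrib
      sum_distrib_left sum_distrib_right mult_ac)

lemma CR_const: "CR j I \<sigma> (mp_const c)"
  by (simp add: CR_def cst.ev_const)

lemma CR_one: "CR j I \<sigma> 1"
  using CR_const[of j I \<sigma> 1] by simp

lemma CR_var: "finite I \<Longrightarrow> k \<in> I \<Longrightarrow> CR j I \<sigma> (mp_var k)"
proof -
  assume a: "finite I" "k \<in> I"
  have "\<And>i. ev mp_const \<sigma> (mp_pderiv i (mp_var k)) * mp_pderiv j (\<sigma> i) =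
      (if i = k then mp_pderiv j (\<sigma> i) else 0)"
    by (simp add: pd_var cst.ev_zero)
  then show ?thesis using a by (simp add: CR_def cst.ev_var sum.delta')
qed

lemma CR_sum: "(\<And>a. a \<in> A \<Longrightarrow> CR j I \<sigma> (f a)) \<Longrightarrow> CR j I \<sigma> (\<Sum>a\<in>A. f a)"
proof (induction A rule: infinite_finite_induct)
  case (infinite A) then show ?case by (simp add: CR_def cst.ev_zero)
next
  case empty then show ?case by (simp add: CR_def)
next
  case (insert x F) then show ?case by (simp add: CR_add)
qed

lemma CR_prod: "(\<And>a. a \<in> A \<Longrightarrow> CR j I \<sigma> (f a)) \<Longrightarrow> CR j I \<sigma> (\<Prod>a\<in>A. f a)"
proof (induction A rule: infinite_finite_induct)
  case (infinite A) then show ?case by (simp add: CR_one)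
next
  case empty then show ?case by (simp add: CR_one)
next
  case (insert x F) then show ?case by (simp add: CR_mult)
qed

lemma CR_power: "CR j I \<sigma> P \<Longrightarrow> CR j I \<sigma> (P ^ k)"
  by (induction k) (auto simp: CR_one CR_mult)

lemma chain_rule:
  fixes F :: "'k::comm_ring_1 mpoly"
  assumes "finite I" "vars_in I F"
  shows "mp_pderiv j (ev mp_const \<sigma> F) =
     (\<Sum>i\<in>I. ev mp_const \<sigma> (mp_pderiv i F) * mp_pderiv j (\<sigma> i))"
proof -
  have "CR j I \<sigma> (ev mp_const mp_var F)"
    unfolding ev_def mon_def
  proof (intro CR_sum CR_mult CR_const CR_prod CR_power CR_var[OF assms(1)])
    fix m i assume "m \<in> ks F" "i \<in> ks m"
    then show "i \<in> I" using assms(2) by (auto simp: vars_in_def)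
  qed
  then show ?thesis by (simp add: CR_def ev_var_id)
qed

lemma (in hm) ev_subst: "ev h y (ev mp_const \<sigma> F) = ev h (\<lambda>i. ev h y (\<sigma> i)) F"
  by (simp add: ev_def[of mp_const] ev_sum ev_mult ev_const ev_mon) (simp add: ev_def)

interpretation tac: hm "to_ac :: 'k::field \<Rightarrow> 'k alg_closure"
  by unfold_locales auto

lemma fin_pow_card:
  fixes x :: "'a :: {finite, field}"
  shows "x ^ card (UNIV :: 'a set) = x"
proof (cases "x = 0")
  case False
  have "x * (\<Prod>y\<in>UNIV-{0}. x * y) = x * x ^ (card (UNIV :: 'a set) - 1) * \<Prod>(UNIV-{0})"
    by (simp add: prod.distrib mult_ac)
  also have "x * x ^ (card (UNIV :: 'a set) - 1) = x ^ Suc (card (UNIV :: 'a set) - 1)"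
    by (subst power_Suc) auto
  also have "Suc (card (UNIV :: 'a set) - 1) = card (UNIV :: 'a set)"
    using finite_UNIV_card_ge_0[where ?'a = 'a] by simp
  also have "(\<Prod>y\<in>UNIV-{0}. x * y) = (\<Prod>y\<in>UNIV-{0}. y)"
    by (rule prod.reindex_bij_witness[of _ "\<lambda>y. y / x" "\<lambda>y. x * y"]) (use False in auto)
  finally show ?thesis
    by simp
qed (use finite_UNIV_card_ge_0[where ?'a = 'a] in auto)

lemma card_ge2: "card (UNIV :: 'a :: {finite, field} set) \<ge> 2"
proof -
  have "{0, 1::'a} \<subseteq> UNIV" by auto
  then have "card {0, 1::'a} \<le> card (UNIV :: 'a set)" by (rule card_mono[OF finite_UNIV])
  then show ?thesis by simp
qed

lemma sum_split_ends:
  fixes q :: nat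
  assumes "q \<ge> 1"
  shows "(\<Sum>k\<le>q. f k) = f 0 + (\<Sum>k\<in>{1..q-1}. f k) + (f q :: 'a::comm_monoid_add)"
proof -
  have "{..q} = insert 0 (insert q {1..q-1})" using assms by (cases q) auto
  then show ?thesis using assms by (simp add: add_ac)
qed

lemma binom_zero:
  assumes "0 < k" "k < card (UNIV :: 'a :: {finite, field} set)"
  shows "of_nat (card (UNIV :: 'a set) choose k) = (0::'a)"
proof -
  define q where "q = card (UNIV :: 'a set)"
  have q2: "q \<ge> 2" unfolding q_def by (rule card_ge2)
  define P :: "'a poly" where "P = (\<Sum>k\<in>{1..q-1}. monom (of_nat (q choose k)) k)"
  have coeffP: "coeff P n = (if n \<in> {1..q-1} then of_nat (q choose n) else 0)" for n
    by (simp add: P_def coeff_sum)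
  have root: "poly P x = 0" for x
  proof -
    have "(x + 1) ^ q = (\<Sum>k\<le>q. of_nat (q choose k) * x ^ k * 1 ^ (q - k))"
      by (rule binomial_ring)
    also have "\<dots> = 1 + poly P x + x ^ q"
      using q2 by (subst sum_split_ends) (auto simp: P_def poly_sum poly_monom)
    finally have "(x + 1) ^ q = 1 + poly P x + x ^ q" .
    moreover have "(x + 1) ^ q = x + 1" "x ^ q = x" unfolding q_def by (rule fin_pow_card)+
    ultimately show ?thesis by simp
  qed
  have "P = 0"
  proof (rule ccontr)
    assume "P \<noteq> 0"
    then have "card {x. poly P x = 0} \<le> degree P" by (rule card_poly_roots_bound)
    moreover have "degree P \<le> q - 1" by (rule degree_le) (auto simp: coeffP)
    moreover have "{x. poly P x = 0} = UNIV" using root by auto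
    ultimately show False using q2 unfolding q_def by simp
  qed
  then have "coeff P k = 0" by simp
  moreover have "k \<in> {1..q-1}" using assms unfolding q_def by auto
  ultimately have "of_nat (q choose k) = (0::'a)" using coeffP[of k] by simp
  then show ?thesis by (simp add: q_def)
qed

lemma frob_add:
  fixes a b :: "'k :: {finite, field} mpoly"
  shows "(a + b) ^ card (UNIV :: 'k set) = a ^ card (UNIV :: 'k set) + b ^ card (UNIV :: 'k set)"
proof -
  define q where "q = card (UNIV :: 'k set)"
  have q2: "q \<ge> 2" unfolding q_def by (rule card_ge2)
  have z: "of_nat (q choose k) = (0 :: 'k mpoly)" if "k \<in> {1..q-1}" for k
  proof -
    have "(of_nat (q choose k) :: 'k) = 0" using that q2 unfolding q_def by (intro binom_zero) auto
    then show ?thesis by (simp flip: single_of_nat)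
  qed
  have "(a + b) ^ q = (\<Sum>k\<le>q. of_nat (q choose k) * a ^ k * b ^ (q - k))"
    by (rule binomial_ring)
  also have "\<dots> = b ^ q + a ^ q"
    using q2 by (subst sum_split_ends) (auto simp: z)
  finally show ?thesis unfolding q_def by (simp add: add.commute)
qed

lemma frob_sum:
  fixes f :: "'b \<Rightarrow> 'k :: {finite, field} mpoly"
  shows "(\<Sum>a\<in>A. f a) ^ card (UNIV :: 'k set) = (\<Sum>a\<in>A. f a ^ card (UNIV :: 'k set))"
proof (induction A rule: infinite_finite_induct)
  case (infinite A)
  then show ?case using card_ge2[where 'a='k] by (simp add: power_0_left)
next
  case empty
  then show ?case using card_ge2[where 'a='k] by (simp add: power_0_left)
next
  case (insert x F)
  then show ?case by (simp add: frob_add)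
qed

lemma const_power: "mp_const c ^ k = (mp_const (c ^ k) :: 'k::comm_ring_1 mpoly)"
  by (induction k) (auto simp: const_mult)

lemma frob_linear:
  fixes c :: "nat \<Rightarrow> 'k :: {finite, field}"
  shows "(\<Sum>j\<in>A. mp_const (c j) * P j) ^ card (UNIV :: 'k set) =
         (\<Sum>j\<in>A. mp_const (c j) * P j ^ card (UNIV :: 'k set))"
  by (simp add: frob_sum power_mult_distrib const_power fin_pow_card)

lemma mon_deg_superset:
  assumes "finite S" "ks m \<subseteq> S"
  shows "mon_deg m = (\<Sum>i\<in>S. lk m i)"
  unfolding mon_deg_def
  by (rule sum.mono_neutral_left) (use assms in \<open>auto simp: in_keys_iff\<close>)

lemma mon_deg_add: "mon_deg (a + b) = mon_deg a + mon_deg b"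
proof -
  let ?S = "ks a \<union> ks b"
  have "mon_deg (a + b) = (\<Sum>i\<in>?S. lk (a + b) i)"
    by (rule mon_deg_superset) (use keys_add[of a b] in auto)
  also have "\<dots> = (\<Sum>i\<in>?S. lk a i) + (\<Sum>i\<in>?S. lk b i)"
    by (simp add: lookup_add sum.distrib)
  also have "\<dots> = mon_deg a + mon_deg b"
    by (subst (1 2) mon_deg_superset[of ?S]) auto
  finally show ?thesis .
qed

lemma mon_deg_single [simp]: "mon_deg (sg i k) = k"
  by (simp add: mon_deg_def)

lemma mon_deg_zero [simp]: "mon_deg 0 = 0"
  by (simp add: mon_deg_def)

lemma mon_deg_eq_0: "mon_deg m = 0 \<longleftrightarrow> m = 0"
proof
  assume "mon_deg m = 0"
  then have "\<forall>i\<in>ks m. lk m i = 0" unfolding mon_deg_def by simp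
  then show "m = 0" by (metis ex_in_conv in_keys_iff keys_eq_empty)
qed simp

lemma hom_zero [simp]: "homogeneous d 0"
  by (simp add: homogeneous_def)

lemma hom_add: "homogeneous d P \<Longrightarrow> homogeneous d Q \<Longrightarrow> homogeneous d (P + Q)"
  using keys_add[of P Q] by (auto simp: homogeneous_def)

lemma hom_sum: "(\<And>a. a \<in> A \<Longrightarrow> homogeneous d (f a)) \<Longrightarrow> homogeneous d (\<Sum>a\<in>A. f a)"
  by (induction A rule: infinite_finite_induct) (auto simp: hom_add)

lemma hom_mult: "homogeneous a P \<Longrightarrow> homogeneous b Q \<Longrightarrow> homogeneous (a + b) (P * Q :: 'k::comm_ring_1 mpoly)"
  using keys_mult[of P Q] by (auto simp: homogeneous_def mon_deg_add)

lemma hom_one: "homogeneous 0 (1 :: 'k::comm_ring_1 mpoly)"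
  by (simp add: homogeneous_def flip: single_one)

lemma hom_prod: "(\<And>a. a \<in> A \<Longrightarrow> homogeneous (d a) (f a)) \<Longrightarrow>
    homogeneous (\<Sum>a\<in>A. d a) (\<Prod>a\<in>A. f a :: 'k::comm_ring_1 mpoly)"
  by (induction A rule: infinite_finite_induct) (auto simp: hom_one hom_mult)

lemma hom_power: "homogeneous d P \<Longrightarrow> homogeneous (k * d) (P ^ k :: 'k::comm_ring_1 mpoly)"
  by (induction k) (auto simp: hom_one dest: hom_mult)

lemma hom_const: "homogeneous 0 (mp_const c)"
  by (simp add: homogeneous_def mp_const_def)

lemma hom_var: "homogeneous 1 (mp_var i :: 'k::comm_ring_1 mpoly)"
  by (simp add: homogeneous_def mp_var_def)

lemma hom_subst:
  assumes "homogeneous d F" "\<And>i. homogeneous 1 (\<sigma> i)"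
  shows "homogeneous d (ev mp_const \<sigma> (F :: 'k::comm_ring_1 mpoly))"
  unfolding ev_def
proof (rule hom_sum)
  fix m assume m: "m \<in> ks F"
  have "homogeneous (0 + (\<Sum>i\<in>ks m. lk m i * 1)) (mp_const (lk F m) * mon \<sigma> m)"
    unfolding mon_def by (intro hom_mult hom_const hom_prod hom_power assms(2))
  moreover have "0 + (\<Sum>i\<in>ks m. lk m i * 1) = d"
    using assms(1) m by (simp add: homogeneous_def mon_deg_def)
  ultimately show "homogeneous d (mp_const (lk F m) * mon \<sigma> m)" by simp
qed

definition sig :: "nat \<Rightarrow> (nat \<Rightarrow> nat \<Rightarrow> 'k::field) \<Rightarrow> nat \<Rightarrow> 'k mpoly" where
  "sig n A i = (\<Sum>j\<le>n. mp_const (A i j) * mp_var j)"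

lemma sig_eq: "sig n A = (\<lambda>i. \<Sum>j\<le>n. mp_const (A i j) * mp_var j)"
  by (rule ext) (simp add: sig_def)

lemma lin_change_ev: "lin_change n A F = ev mp_const (sig n A) F"
  by (simp add: lin_change_def sig_eq mp_subst_ev)

lemma pd_sig: "j \<le> n \<Longrightarrow> mp_pderiv j (sig n A i) = mp_const (A i j)"
  by (simp add: sig_def pd_sum pd_const_mult pd_var if_distrib sum.delta cong: if_cong)

lemma hom_sig: "homogeneous 1 (sig n A i)"
  unfolding sig_def
proof (rule hom_sum)
  fix j show "homogeneous 1 (mp_const (A i j) * mp_var j)"
    using hom_mult[OF hom_const hom_var] by simp
qed

definition TT :: "nat \<Rightarrow> 'k::{finite,field} mpoly \<Rightarrow> 'k mpoly" where
  "TT n P = (\<Sum>i\<le>n. mp_var i ^ card (UNIV :: 'k set) * mp_pderiv i P)"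

lemma fnc_TT: "frobenius_nonclassical n F \<longleftrightarrow> F dvd TT n F"
  by (simp add: frobenius_nonclassical_def TT_def)

lemma pd_lin_change:
  fixes F :: "'k::field mpoly"
  assumes "vars_in {..n} F" "j \<le> n"
  shows "mp_pderiv j (ev mp_const (sig n A) F) =
     (\<Sum>i\<le>n. ev mp_const (sig n A) (mp_pderiv i F) * mp_const (A i j))"
  using chain_rule[OF _ assms(1), of j "sig n A"] assms(2) by (simp add: pd_sig)

lemma TT_transfer:
  fixes F :: "'k::{finite,field} mpoly"
  assumes "vars_in {..n} F"
  shows "TT n (ev mp_const (sig n A) F) = ev mp_const (sig n A) (TT n F)"
proof -
  define q where "q = card (UNIV :: 'k set)"
  define S where "S = ev mp_const (sig n A)"
  have "TT n (S F) = (\<Sum>j\<le>n. mp_var j ^ q * (\<Sum>i\<le>n. S (mp_pderiv i F) * mp_const (A i j)))"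
    unfolding TT_def q_def S_def by (rule sum.cong[OF refl]) (simp add: pd_lin_change[OF assms])
  also have "\<dots> = (\<Sum>i\<le>n. S (mp_pderiv i F) * (\<Sum>j\<le>n. mp_const (A i j) * mp_var j ^ q))"
    by (simp add: sum_distrib_left sum_distrib_right mult_ac) (rule sum.swap)
  also have "\<dots> = (\<Sum>i\<le>n. S (mp_pderiv i F) * sig n A i ^ q)"
    unfolding sig_def q_def by (simp add: frob_linear)
  also have "\<dots> = S (TT n F)"
    unfolding TT_def S_def q_def by (simp add: cst.ev_sum cst.ev_mult cst.ev_power cst.ev_var mult_ac)
  finally show ?thesis unfolding S_def .
qed

lemma fnc_transfer:
  fixes F :: "'k::{finite,field} mpoly"
  assumes "vars_in {..n} F" "frobenius_nonclassical n F"
  shows "frobenius_nonclassical n (lin_change n A F)"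
proof -
  obtain L where L: "TT n F = F * L" using assms(2) by (auto simp: fnc_TT elim: dvdE)
  have "TT n (lin_change n A F) = lin_change n A F * ev mp_const (sig n A) L"
    by (simp add: lin_change_ev TT_transfer[OF assms(1)] L cst.ev_mult)
  then show ?thesis by (simp add: fnc_TT)
qed

lemma smooth_transfer:
  fixes F :: "'k::field mpoly" and y :: "nat \<Rightarrow> 'k alg_closure"
  assumes vars: "vars_in {..n} F"
    and AB: "\<forall>i\<le>n. \<forall>k\<le>n. (\<Sum>j\<le>n. A i j * B j k) = (if i = k then 1 else 0)"
    and BA: "\<forall>i\<le>n. \<forall>k\<le>n. (\<Sum>j\<le>n. B i j * A j k) = (if i = k then 1 else 0)"
    and ynz: "\<exists>i\<le>n. y i \<noteq> 0"
    and y0: "ev to_ac y (lin_change n A F) = 0"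
    and y1: "\<forall>j\<le>n. ev to_ac y (mp_pderiv j (lin_change n A F)) = 0"
  shows "\<not> smooth_hypersurface n F"
proof -
  define x where "x = (\<lambda>i. \<Sum>j\<le>n. to_ac (A i j) * y j)"
  have evx: "ev to_ac y (ev mp_const (sig n A) P) = ev to_ac x P" for P :: "'k mpoly"
    unfolding tac.ev_subst
    by (simp add: x_def sig_def tac.ev_sum tac.ev_mult tac.ev_const tac.ev_var)
  have F0: "ev to_ac x F = 0" using y0 by (simp add: lin_change_ev evx)
  have g: "(\<Sum>i\<le>n. ev to_ac x (mp_pderiv i F) * to_ac (A i j)) = 0" if "j \<le> n" for j
    using y1 that
    by (simp add: lin_change_ev pd_lin_change[OF vars] tac.ev_sum tac.ev_mult tac.ev_const evx)
  have D0: "ev to_ac x (mp_pderiv k F) = 0" if k: "k \<le> n" for k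
  proof -
    let ?g = "\<lambda>i. ev to_ac x (mp_pderiv i F)"
    have "0 = (\<Sum>j\<le>n. (\<Sum>i\<le>n. ?g i * to_ac (A i j)) * to_ac (B j k))"
      using g by simp
    also have "\<dots> = (\<Sum>i\<le>n. ?g i * to_ac (\<Sum>j\<le>n. A i j * B j k))"
      by (simp add: sum_distrib_left sum_distrib_right to_ac_sum mult_ac) (rule sum.swap)
    also have "\<dots> = (\<Sum>i\<le>n. if i = k then ?g i else 0)"
      using AB k by (intro sum.cong refl) auto
    also have "\<dots> = ?g k" using k by simp
    finally show ?thesis by simp
  qed
  have xnz: "\<exists>i\<le>n. x i \<noteq> 0"
  proof (rule ccontr)
    assume "\<not> ?thesis"
    then have xz: "\<forall>i\<le>n. x i = 0" by auto
    have "y k = 0" if k: "k \<le> n" for k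
    proof -
      have "0 = (\<Sum>i\<le>n. to_ac (B k i) * x i)" using xz by simp
      also have "\<dots> = (\<Sum>j\<le>n. to_ac (\<Sum>i\<le>n. B k i * A i j) * y j)"
        unfolding x_def
        by (simp add: sum_distrib_left sum_distrib_right to_ac_sum mult_ac) (rule sum.swap)
      also have "\<dots> = (\<Sum>j\<le>n. if j = k then y j else 0)"
        using BA k by (intro sum.cong refl) auto
      also have "\<dots> = y k" using k by simp
      finally show ?thesis by simp
    qed
    then show False using ynz by auto
  qed
  show ?thesis
    unfolding smooth_hypersurface_def mp_eval_ev
    using xnz F0 D0 by blast
qed

lemma lookup_mult_sum:
  fixes P L :: "'k::comm_ring_1 mpoly"
  shows "lk (P * L) \<mu> = (\<Sum>a\<in>ks P. \<Sum>b\<in>ks L. (lk P a * lk L b when a + b = \<mu>))"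
  by (subst cst.mult_expand) (simp add: lookup_sum lookup_single)

lemma lookup_single_mult:
  fixes P :: "'k::comm_ring_1 mpoly"
  shows "lk (sg k c * P) \<mu> = (if \<exists>v. \<mu> = k + v then c * lk P (\<mu> - k) else 0)"
proof (cases "c = 0")
  case True then show ?thesis by simp
next
  case False
  then have "lk (sg k c * P) \<mu> = (\<Sum>b\<in>ks P. (c * lk P b when k + b = \<mu>))"
    by (simp add: lookup_mult_sum)
  also have "\<dots> = (if \<exists>v. \<mu> = k + v then c * lk P (\<mu> - k) else 0)"
  proof (cases "\<exists>v. \<mu> = k + v")
    case True
    then obtain v where v: "\<mu> = k + v" by auto
    have "(\<Sum>b\<in>ks P. (c * lk P b when k + b = \<mu>)) = (\<Sum>b\<in>ks P. (if b = v then c * lk P b else 0))"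
      by (rule sum.cong[OF refl]) (auto simp: v when_def)
    also have "\<dots> = c * lk P v" by (simp add: sum.delta in_keys_iff)
    finally show ?thesis using v by simp
  next
    case False
    then have "\<And>b. (c * lk P b when k + b = \<mu>) = 0" by (auto simp: when_def)
    then show ?thesis using False by simp
  qed
  finally show ?thesis .
qed

lemma deg_le_eq:
  assumes "\<forall>i. lk a i \<le> lk c i"
  shows "mon_deg a \<le> mon_deg c" "mon_deg a = mon_deg c \<Longrightarrow> a = c"
proof -
  have c: "c = a + (c - a)"
    by (rule poly_mapping_eqI) (use assms in \<open>simp add: lookup_add lookup_minus\<close>)
  then have d: "mon_deg c = mon_deg a + mon_deg (c - a)" by (metis mon_deg_add)
  then show "mon_deg a \<le> mon_deg c" by simp
  assume "mon_deg a = mon_deg c"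
  then have "c - a = 0" using d by (simp add: mon_deg_eq_0)
  then show "a = c" using c by simp
qed

lemma keys_pd:
  fixes F :: "'k::comm_ring_1 mpoly"
  assumes "u \<in> ks (mp_pderiv j F)"
  shows "u + sg j 1 \<in> ks F"
  using assms by (auto simp: in_keys_iff lookup_pd)

lemma keys_add_nat: "ks (a + b) = ks a \<union> ks (b :: nat \<Rightarrow>\<^sub>0 nat)"
  by (auto simp: in_keys_iff lookup_add)

definition ispure :: "nat set \<Rightarrow> nat set \<Rightarrow> (nat \<Rightarrow>\<^sub>0 nat) \<Rightarrow> bool" where
  "ispure Xs Ys u \<longleftrightarrow> ks u \<subseteq> Xs \<or> ks u \<subseteq> Ys"

lemma ispure_sym: "ispure Xs Ys u = ispure Ys Xs u"
  by (auto simp: ispure_def)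

locale setting =
  fixes F :: "'k::{finite,field} mpoly" and L :: "'k mpoly" and n :: nat and Xs Ys :: "nat set"
    and qn :: nat
  assumes qn: "qn = card (UNIV :: 'k set)"
    and disj: "Xs \<inter> Ys = {}"
    and pureF: "\<And>u. u \<in> ks F \<Longrightarrow> ispure Xs Ys u"
    and homF: "homogeneous (qn + 2) F"
    and eqT: "TT n F = F * L"
begin


lemma q2: "qn \<ge> 2" unfolding qn by (rule card_ge2)

lemma ofq: "(of_nat qn :: 'k) = 0"
proof -
  have "(\<Sum>y\<in>(UNIV::'k set). y) = (\<Sum>y\<in>UNIV. y + 1)"
    by (rule sum.reindex_bij_witness[of _ "\<lambda>y. y + 1" "\<lambda>y. y - 1"]) auto
  also have "\<dots> = (\<Sum>y\<in>UNIV. y) + of_nat (card (UNIV::'k set))"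
    by (simp add: sum.distrib)
  finally show ?thesis unfolding qn by simp
qed

lemma degF: "u \<in> ks F \<Longrightarrow> mon_deg u = qn + 2"
  using homF by (simp add: homogeneous_def)

lemma keys_TT_pure:
  assumes "u \<in> ks (TT n F)"
  shows "ispure Xs Ys u"
proof -
  have "u \<in> (\<Union>i\<in>{..n}. ks (mp_var i ^ qn * mp_pderiv i F))"
    using assms keys_sum[of "\<lambda>i. mp_var i ^ qn * mp_pderiv i F" "{..n}"]
    unfolding TT_def qn by blast
  then obtain i where "u \<in> ks (mp_var i ^ qn * mp_pderiv i F)" by blast
  then have "u \<in> {a + b | a b. a \<in> ks (mp_var i ^ qn :: 'k mpoly) \<and> b \<in> ks (mp_pderiv i F)}"
    using keys_mult[of "mp_var i ^ qn" "mp_pderiv i F"] by blast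
  then obtain a b where a: "a \<in> ks (mp_var i ^ qn :: 'k mpoly)" and b: "b \<in> ks (mp_pderiv i F)"
    and u0: "u = a + b"
    by blast
  have "ks (mp_var i ^ qn :: 'k mpoly) = {sg i qn}" by (simp add: var_power)
  then have u: "u = sg i qn + b" using a u0 by simp
  have "b + sg i 1 \<in> ks F" using keys_pd[OF b] .
  then have p: "ispure Xs Ys (b + sg i 1)" by (rule pureF)
  have "qn \<noteq> 0" using q2 by simp
  then have "ks u = ks (b + sg i 1)" unfolding u keys_add_nat by auto
  then show ?thesis using p by (simp add: ispure_def)
qed

lemma S1:
  assumes h: "h \<in> ks F" "ks h \<subseteq> Ys"
    and m2: "ks m2 \<subseteq> Xs" "mon_deg m2 = qn - 1"
  shows "lk L m2 = 0"
proof -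
  define \<nu> where "\<nu> = m2 + h"
  have "m2 \<noteq> 0" using m2 q2 by auto
  then obtain i where i: "i \<in> ks m2" by (metis all_not_in_conv keys_eq_empty)
  have "h \<noteq> 0" using degF[OF h(1)] by auto
  then obtain k where k: "k \<in> ks h" by (metis all_not_in_conv keys_eq_empty)
  have "\<not> ispure Xs Ys \<nu>"
    using i k m2(1) h(2) disj by (auto simp: ispure_def \<nu>_def keys_add_nat)
  then have "\<nu> \<notin> ks (TT n F)" using keys_TT_pure by blast
  then have T0: "lk (F * L) \<nu> = 0" by (simp add: eqT in_keys_iff)
  have hX: "lk h j = 0" if "j \<in> Xs" for j using h(2) that disj by (auto simp: in_keys_iff)
  have m2Y: "lk m2 j = 0" if "j \<notin> Xs" for j using m2(1) that by (auto simp: in_keys_iff)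
  have trm: "(lk F a * lk L b when a + b = \<nu>) = (if a = h \<and> b = m2 then lk F a * lk L b else 0)"
    if a: "a \<in> ks F" for a b
  proof (cases "a + b = \<nu>")
    case False
    then show ?thesis by (auto simp: \<nu>_def add.commute)
  next
    case True
    have ab: "lk a j + lk b j = lk m2 j + lk h j" for j
      using True by (metis \<nu>_def lookup_add)
    have "ks a \<subseteq> Xs \<or> ks a \<subseteq> Ys" using pureF[OF a] by (simp add: ispure_def)
    then have "a = h"
    proof
      assume aX: "ks a \<subseteq> Xs"
      have "\<forall>j. lk a j \<le> lk m2 j"
      proof
        fix j show "lk a j \<le> lk m2 j"
        proof (cases "j \<in> Xs")
          case True then show ?thesis using ab[of j] hX[OF True] by simp
        next
          case False
          then have "j \<notin> ks a" using aX by blast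
          then show ?thesis by (simp add: in_keys_iff)
        qed
      qed
      then have "mon_deg a \<le> mon_deg m2" by (rule deg_le_eq(1))
      then show "a = h" using degF[OF a] m2(2) by simp
    next
      assume aY: "ks a \<subseteq> Ys"
      have "\<forall>j. lk a j \<le> lk h j"
      proof
        fix j show "lk a j \<le> lk h j"
        proof (cases "j \<in> Ys")
          case True
          then have "j \<notin> Xs" using disj by blast
          then show ?thesis using ab[of j] m2Y[of j] by simp
        next
          case False
          then have "j \<notin> ks a" using aY by blast
          then show ?thesis by (simp add: in_keys_iff)
        qed
      qed
      then show "a = h" using deg_le_eq(2) degF[OF a] degF[OF h(1)] by simp
    qed
    moreover then have "b = m2" using True unfolding \<nu>_def
      by (metis add.commute add_left_cancel)
    ultimately show ?thesis using True by simp
  qed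
  have "lk (F * L) \<nu> = (\<Sum>a\<in>ks F. \<Sum>b\<in>ks L. (if a = h \<and> b = m2 then lk F a * lk L b else 0))"
    by (simp add: lookup_mult_sum trm)
  also have "\<dots> = (\<Sum>a\<in>ks F. if a = h then lk F h * lk L m2 else 0)"
  proof (rule sum.cong[OF refl])
    fix a
    show "(\<Sum>b\<in>ks L. (if a = h \<and> b = m2 then lk F a * lk L b else 0)) =
          (if a = h then lk F h * lk L m2 else 0)"
      by (cases "a = h"; cases "m2 \<in> ks L") (auto simp: sum.delta in_keys_iff)
  qed
  also have "\<dots> = lk F h * lk L m2"
    using h(1) by (simp add: sum.delta)
  finally have "lk F h * lk L m2 = 0" using T0 by simp
  then show ?thesis using h(1) by (simp add: in_keys_iff)
qed

end

context setting
begin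

lemma S2:
  assumes h: "h \<in> ks F" "ks h \<subseteq> Ys" and i0: "i0 \<in> Xs" and j: "j \<in> Xs"
  shows "lk (F * L) (sg i0 (2 * qn) + sg j 1) = 0"
proof -
  define \<mu> where "\<mu> = sg i0 (2 * qn) + sg j (1::nat)"
  have trm: "(lk F a * lk L b when a + b = \<mu>) = 0" if a: "a \<in> ks F" for a b
  proof (cases "a + b = \<mu>")
    case True
    have "ks b \<subseteq> ks \<mu>" using True by (auto simp: keys_add_nat)
    also have "\<dots> \<subseteq> Xs" using i0 j by (auto simp: \<mu>_def keys_add_nat)
    finally have bX: "ks b \<subseteq> Xs" .
    have "mon_deg \<mu> = 2 * qn + 1" by (simp add: \<mu>_def mon_deg_add)
    moreover have "mon_deg \<mu> = mon_deg a + mon_deg b" using True mon_deg_add[of a b] by simp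
    ultimately have "mon_deg b = qn - 1" using degF[OF a] by simp
    then have "lk L b = 0" using S1[OF h bX] by simp
    then show ?thesis by simp
  qed simp
  show ?thesis
    unfolding \<mu>_def[symmetric] by (simp add: lookup_mult_sum trm)
qed

lemma TT_expand: "TT n F = (\<Sum>i\<le>n. sg (sg i qn) 1 * mp_pderiv i F)"
  by (simp add: TT_def qn var_power)

lemma S3:
  assumes i0: "i0 \<le> n"
  shows "lk (TT n F) (sg i0 (2 * qn) + sg j 1) = lk (mp_pderiv j F) (sg i0 (qn + 1))"
proof -
  define \<mu> where "\<mu> = sg i0 (2 * qn) + sg j (1::nat)"
  have mu: "\<mu> = sg i0 qn + (sg i0 qn + sg j 1)"
    by (simp add: \<mu>_def mult_2 single_add add.assoc)
  have t: "lk (sg (sg i qn) 1 * mp_pderiv i F) \<mu> =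
       (if i = i0 then lk (mp_pderiv i0 F) (sg i0 qn + sg j 1) else 0)" for i
  proof (cases "i = i0")
    case True
    have "\<exists>v. \<mu> = sg i qn + v" using mu True by blast
    then show ?thesis using True by (simp add: lookup_single_mult mu)
  next
    case False
    have "\<not> (\<exists>v. \<mu> = sg i qn + v)"
    proof
      assume "\<exists>v. \<mu> = sg i qn + v"
      then obtain v where "\<mu> = sg i qn + v" by blast
      then have "lk \<mu> i \<ge> qn" by (simp add: lookup_add)
      moreover have "lk \<mu> i \<le> 1" using False by (simp add: \<mu>_def lookup_add lookup_single when_def)
      ultimately show False using q2 by simp
    qed
    then show ?thesis using False by (simp add: lookup_single_mult)
  qed
  have "lk (TT n F) \<mu> = lk (mp_pderiv i0 F) (sg i0 qn + sg j 1)"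
    by (simp add: TT_expand lookup_sum t i0)
  also have "\<dots> = lk (mp_pderiv j F) (sg i0 (qn + 1))"
  proof -
    have m: "sg i0 qn + sg j 1 + sg i0 1 = sg i0 (qn + 1) + sg j (1::nat)"
      unfolding single_add[of i0 qn 1] by (simp only: add_ac)
    have c: "of_nat (lk (sg i0 qn + sg j 1) i0 + 1) = (of_nat (lk (sg i0 (qn + 1)) j + 1) :: 'k)"
      by (cases "j = i0") (simp_all add: lookup_add lookup_single when_def ofq)
    show ?thesis unfolding lookup_pd m c by (rule refl)
  qed
  finally show ?thesis unfolding \<mu>_def .
qed

lemma alpha:
  assumes h: "h \<in> ks F" "ks h \<subseteq> Ys" and i0: "i0 \<in> Xs" "i0 \<le> n"
  shows "lk (mp_pderiv j F) (sg i0 (qn + 1)) = 0"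
proof (cases "j \<in> Xs")
  case True
  show ?thesis using S3[OF i0(2), of j] S2[OF h i0(1) True] by (simp add: eqT)
next
  case False
  define u where "u = sg i0 (qn + 1) + sg j (1::nat)"
  have "ks u = {i0, j}" by (auto simp: u_def keys_add_nat)
  then have "\<not> ispure Xs Ys u" using False i0 disj by (auto simp: ispure_def)
  then have "u \<notin> ks F" using pureF by blast
  then have "lk F u = 0" by (simp add: in_keys_iff)
  then show ?thesis unfolding lookup_pd u_def[symmetric] by simp
qed

lemma trivial:
  assumes i1: "i1 \<in> Ys" and noY: "\<not> (\<exists>h\<in>ks F. ks h \<subseteq> Ys)"
  shows "lk F (sg i1 (qn + 2)) = 0" "lk (mp_pderiv j F) (sg i1 (qn + 1)) = 0"
proof -
  show "lk F (sg i1 (qn + 2)) = 0"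
  proof (rule ccontr)
    assume "lk F (sg i1 (qn + 2)) \<noteq> 0"
    then have "sg i1 (qn + 2) \<in> ks F" by (simp add: in_keys_iff)
    moreover have "ks (sg i1 (qn + 2)) \<subseteq> Ys" using i1 by simp
    ultimately show False using noY by blast
  qed
  define u where "u = sg i1 (qn + 1) + sg j (1::nat)"
  have "ks u = {i1, j}" by (auto simp: u_def keys_add_nat)
  have "u \<notin> ks F"
  proof
    assume uF: "u \<in> ks F"
    then have "ks u \<subseteq> Xs \<or> ks u \<subseteq> Ys" using pureF by (simp add: ispure_def)
    moreover have "\<not> ks u \<subseteq> Ys" using noY uF by blast
    moreover have "\<not> ks u \<subseteq> Xs" using \<open>ks u = {i1, j}\<close> i1 disj by blast
    ultimately show False by blast
  qed
  then have "lk F u = 0" by (simp add: in_keys_iff)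
  then show "lk (mp_pderiv j F) (sg i1 (qn + 1)) = 0" unfolding lookup_pd u_def[symmetric] by simp
qed

lemma sym: "setting F L n Ys Xs qn"
  by unfold_locales (use qn disj pureF homF eqT in \<open>auto simp: ispure_sym\<close>)

end

lemma EV:
  fixes P :: "'k::field mpoly" and s t :: "'k alg_closure"
  assumes disj: "Xs \<inter> Ys = {}" and pureP: "\<And>u. u \<in> ks P \<Longrightarrow> ispure Xs Ys u"
    and homP: "homogeneous d P" and d: "d > 0" and i0: "i0 \<in> Xs" and i1: "i1 \<in> Ys"
  shows "ev to_ac (\<lambda>i. if i = i0 then s else if i = i1 then t else 0) P =
         to_ac (lk P (sg i0 d)) * s ^ d + to_ac (lk P (sg i1 d)) * t ^ d"
proof -
  define p where "p = (\<lambda>i. if i = i0 then s else if i = i1 then t else 0)"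
  have i01: "i0 \<noteq> i1" using i0 i1 disj by blast
  have sgne: "sg i0 d \<noteq> sg i1 d"
  proof
    assume "sg i0 d = sg i1 d"
    then have "lk (sg i0 d) i0 = lk (sg i1 d) i0" by simp
    then show False using i01 d by (simp add: lookup_single when_def)
  qed
  have single_of: "u = sg k d" if "ks u \<subseteq> {k}" "mon_deg u = d" for u k
  proof -
    have "u = sg k (lk u k)"
    proof (rule poly_mapping_eqI)
      fix j show "lk u j = lk (sg k (lk u k)) j"
      proof (cases "j = k")
        case False
        then have "j \<notin> ks u" using that(1) by blast
        then show ?thesis using False by (simp add: in_keys_iff lookup_single when_def)
      qed simp
    qed
    moreover then have "lk u k = d" using that(2) by (metis mon_deg_single)
    ultimately show ?thesis by simp
  qed
  have monp: "mon p u = (if u = sg i0 d then s ^ d else 0) + (if u = sg i1 d then t ^ d else 0)"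
    if u: "u \<in> ks P" for u
  proof (cases "ks u \<subseteq> {i0, i1}")
    case False
    then obtain k where k: "k \<in> ks u" "k \<noteq> i0" "k \<noteq> i1" by blast
    have "mon p u = 0" unfolding mon_def
      by (rule prod_zero) (use k in \<open>auto simp: p_def in_keys_iff intro!: bexI[of _ k]\<close>)
    moreover have "u \<noteq> sg i0 d" "u \<noteq> sg i1 d" using k by (auto split: if_splits)
    ultimately show ?thesis by simp
  next
    case True
    have deg: "mon_deg u = d" using homP u by (simp add: homogeneous_def)
    from pureP[OF u] have "ks u \<subseteq> Xs \<or> ks u \<subseteq> Ys" by (simp add: ispure_def)
    then show ?thesis
    proof
      assume "ks u \<subseteq> Xs"
      then have "i1 \<notin> ks u" using i1 disj by blast
      then have "ks u \<subseteq> {i0}" using True by blast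
      then have "u = sg i0 d" using single_of deg by blast
      then show ?thesis using sgne by (simp add: p_def)
    next
      assume "ks u \<subseteq> Ys"
      then have "i0 \<notin> ks u" using i0 disj by blast
      then have "ks u \<subseteq> {i1}" using True by blast
      then have "u = sg i1 d" using single_of deg by blast
      then show ?thesis using sgne i01 by (simp add: p_def)
    qed
  qed
  have "ev to_ac p P = (\<Sum>u\<in>ks P. to_ac (lk P u) * ((if u = sg i0 d then s ^ d else 0) +
        (if u = sg i1 d then t ^ d else 0)))"
    unfolding ev_def by (rule sum.cong[OF refl]) (simp add: monp)
  also have "\<dots> = (\<Sum>u\<in>ks P. if u = sg i0 d then to_ac (lk P u) * s ^ d else 0) +
                  (\<Sum>u\<in>ks P. if u = sg i1 d then to_ac (lk P u) * t ^ d else 0)"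
  proof -
    have e: "to_ac (lk P u) * ((if u = sg i0 d then s ^ d else 0) + (if u = sg i1 d then t ^ d else 0))
      = (if u = sg i0 d then to_ac (lk P u) * s ^ d else 0) + (if u = sg i1 d then to_ac (lk P u) * t ^ d else 0)" for u
      by (simp add: distrib_left)
    show ?thesis by (simp only: e sum.distrib)
  qed
  also have "\<dots> = to_ac (lk P (sg i0 d)) * s ^ d + to_ac (lk P (sg i1 d)) * t ^ d"
    by (simp only: sum.delta finite_keys) (auto simp: in_keys_iff)
  finally show ?thesis unfolding p_def .
qed

lemma root_exists:
  fixes A B :: "'k::field alg_closure"
  assumes "B \<noteq> 0" "N > 0"
  shows "\<exists>t. A + B * t ^ N = 0"
proof -
  define f where "f k = (if k = 0 then A else 0) + (if k = N then B else 0)" for k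
  have "f N \<noteq> 0" using assms by (simp add: f_def)
  then obtain t where t: "(\<Sum>k\<le>N. f k * t ^ k) = 0" using alg_closed[OF assms(2)] by blast
  have e: "f k * t ^ k = (if k = 0 then A else 0) + (if k = N then B * t ^ N else 0)" for k
    using assms(2) by (auto simp: f_def)
  have "(\<Sum>k\<le>N. f k * t ^ k) = (\<Sum>k\<le>N. if k = 0 then A else 0) + (\<Sum>k\<le>N. if k = N then B * t ^ N else 0)"
    by (simp only: e sum.distrib)
  also have "\<dots> = A + B * t ^ N" by simp
  finally show ?thesis using t by auto
qed

lemma pd_pure_hom:
  fixes F :: "'k::comm_ring_1 mpoly"
  assumes pureF: "\<And>u. u \<in> ks F \<Longrightarrow> ispure Xs Ys u" and homF: "homogeneous (d + 1) F"
  shows "\<And>u. u \<in> ks (mp_pderiv j F) \<Longrightarrow> ispure Xs Ys u" "homogeneous d (mp_pderiv j F)"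
proof -
  fix u assume u: "u \<in> ks (mp_pderiv j F)"
  have k: "u + sg j 1 \<in> ks F" by (rule keys_pd[OF u])
  have "ks u \<subseteq> ks (u + sg j 1)" by (auto simp: keys_add_nat)
  then show "ispure Xs Ys u" using pureF[OF k] by (auto simp: ispure_def)
next
  show "homogeneous d (mp_pderiv j F)"
    unfolding homogeneous_def
  proof
    fix u assume u: "u \<in> ks (mp_pderiv j F)"
    have k: "u + sg j 1 \<in> ks F" by (rule keys_pd[OF u])
    then have "mon_deg (u + sg j 1) = d + 1" using homF by (simp add: homogeneous_def)
    then show "mon_deg u = d" by (simp add: mon_deg_add)
  qed
qed

lemma singular_point:
  fixes F :: "'k::{finite,field} mpoly"
  assumes mn: "m < n"
    and pureF: "\<And>u. u \<in> ks F \<Longrightarrow> ispure {..m} {m<..n} u"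
    and homF: "homogeneous (card (UNIV :: 'k set) + 2) F"
    and fnc: "frobenius_nonclassical n F"
  shows "\<exists>y :: nat \<Rightarrow> 'k alg_closure. (\<exists>i\<le>n. y i \<noteq> 0) \<and> ev to_ac y F = 0 \<and>
           (\<forall>j\<le>n. ev to_ac y (mp_pderiv j F) = 0)"
proof -
  define q where "q = card (UNIV :: 'k set)"
  obtain L where L: "TT n F = F * L" using fnc by (auto simp: fnc_TT elim: dvdE)
  interpret S: setting F L n "{..m}" "{m<..n}" q
    by unfold_locales (use q_def pureF homF L in auto)
  interpret S': setting F L n "{m<..n}" "{..m}" q
    by (rule S.sym)
  have q2: "q \<ge> 2" by (rule S.q2)
  define p where "p = (\<lambda>s t i. if i = 0 then s else if i = n then t else (0::'k alg_closure))"
  have disj: "{..m} \<inter> {m<..n} = {}" by auto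
  have i0: "0 \<in> {..m}" and i1: "n \<in> {m<..n}" using mn by auto
  have n0: "n \<noteq> 0" using mn by auto
  define a where "a = lk F (sg 0 (q + 2))"
  define b where "b = lk F (sg n (q + 2))"
  define \<alpha> where "\<alpha> j = lk (mp_pderiv j F) (sg 0 (q + 1))" for j
  define \<beta> where "\<beta> j = lk (mp_pderiv j F) (sg n (q + 1))" for j
  have evF: "ev to_ac (p s t) F = to_ac a * s ^ (q + 2) + to_ac b * t ^ (q + 2)" for s t
    unfolding p_def a_def b_def
    by (rule EV[OF disj pureF _ _ i0 i1]) (use homF q_def in auto)
  have evD: "ev to_ac (p s t) (mp_pderiv j F) = to_ac (\<alpha> j) * s ^ (q + 1) + to_ac (\<beta> j) * t ^ (q + 1)"
    for s t j
  proof -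
    have h1: "homogeneous (q + 1 + 1) F" using homF q_def by simp
    show ?thesis
      unfolding p_def \<alpha>_def \<beta>_def
      by (rule EV[OF disj pd_pure_hom(1)[OF pureF h1] pd_pure_hom(2)[OF pureF h1] _ i0 i1]) auto
  qed
  have pn: "p 0 1 n = 1" "p 1 t 0 = 1" for t using n0 by (auto simp: p_def)
  have case_n: ?thesis if b0: "b = 0" and beta0: "\<forall>j. \<beta> j = 0"
  proof (rule exI[of _ "p 0 1"], intro conjI)
    show "\<exists>i\<le>n. p 0 1 i \<noteq> 0" using pn by (intro exI[of _ n]) auto
    show "ev to_ac (p 0 1) F = 0" using b0 by (simp add: evF)
    show "\<forall>j\<le>n. ev to_ac (p 0 1) (mp_pderiv j F) = 0" using beta0 by (simp add: evD)
  qed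
  have case_0: ?thesis if a0: "a = 0" and alpha0: "\<forall>j. \<alpha> j = 0"
  proof (rule exI[of _ "p 1 0"], intro conjI)
    show "\<exists>i\<le>n. p 1 0 i \<noteq> 0" using pn by (intro exI[of _ 0]) auto
    show "ev to_ac (p 1 0) F = 0" using a0 q2 by (simp add: evF)
    show "\<forall>j\<le>n. ev to_ac (p 1 0) (mp_pderiv j F) = 0" using alpha0 q2 by (simp add: evD)
  qed
  show ?thesis
  proof (cases "\<exists>h\<in>ks F. ks h \<subseteq> {m<..n}")
    case False
    show ?thesis
      by (rule case_n) (use S.trivial[OF i1 False] in \<open>auto simp: b_def \<beta>_def\<close>)
  next
    case True
    then obtain h where h: "h \<in> ks F" "ks h \<subseteq> {m<..n}" by blast
    show ?thesis
    proof (cases "\<exists>g\<in>ks F. ks g \<subseteq> {..m}")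
      case False
      show ?thesis
        by (rule case_0) (use S'.trivial[OF i0 False] in \<open>auto simp: a_def \<alpha>_def\<close>)
    next
      case True
      then obtain g where g: "g \<in> ks F" "ks g \<subseteq> {..m}" by blast
      have alpha0: "\<forall>j. \<alpha> j = 0" unfolding \<alpha>_def using S.alpha[OF h i0] by simp
      have beta0: "\<forall>j. \<beta> j = 0" unfolding \<beta>_def using S'.alpha[OF g i1] by simp
      show ?thesis
      proof (cases "b = 0")
        case True then show ?thesis using case_n beta0 by blast
      next
        case False
        then obtain t where t: "to_ac a + to_ac b * t ^ (q + 2) = 0"
          using root_exists[of "to_ac b" "q + 2" "to_ac a"] by auto
        show ?thesis
        proof (rule exI[of _ "p 1 t"], intro conjI)
          show "\<exists>i\<le>n. p 1 t i \<noteq> 0" using pn by (intro exI[of _ 0]) auto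
          show "ev to_ac (p 1 t) F = 0" using t by (simp add: evF)
          show "\<forall>j\<le>n. ev to_ac (p 1 t) (mp_pderiv j F) = 0" using alpha0 beta0 by (simp add: evD)
        qed
      qed
    qed
  qed
qed

lemma inv_comm:
  fixes A B :: "nat \<Rightarrow> nat \<Rightarrow> 'k::field"
  assumes AB: "\<forall>i\<le>n. \<forall>k\<le>n. (\<Sum>j\<le>n. A i j * B j k) = (if i = k then 1 else 0)"
  shows "\<forall>i\<le>n. \<forall>k\<le>n. (\<Sum>j\<le>n. B i j * A j k) = (if i = k then 1 else 0)"
proof -
  define MA where "MA = mat (Suc n) (Suc n) (\<lambda>(i,j). A i j)"
  define MB where "MB = mat (Suc n) (Suc n) (\<lambda>(i,j). B i j)"
  have cA: "MA \<in> carrier_mat (Suc n) (Suc n)" and cB: "MB \<in> carrier_mat (Suc n) (Suc n)"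
    by (auto simp: MA_def MB_def)
  have prod: "(M1 * M2) $$ (i, k) = (\<Sum>j\<le>n. M1 $$ (i, j) * M2 $$ (j, k))"
    if "M1 \<in> carrier_mat (Suc n) (Suc n)" "M2 \<in> carrier_mat (Suc n) (Suc n)" "i \<le> n" "k \<le> n"
    for M1 M2 :: "'k mat" and i k
    using that by (simp add: index_mult_mat scalar_prod_def atLeast0LessThan lessThan_Suc_atMost)
  have "MA * MB = 1\<^sub>m (Suc n)"
  proof (rule eq_matI)
    fix i k assume "i < dim_row (1\<^sub>m (Suc n) :: 'k mat)" "k < dim_col (1\<^sub>m (Suc n) :: 'k mat)"
    then have ik: "i \<le> n" "k \<le> n" by auto
    show "(MA * MB) $$ (i, k) = 1\<^sub>m (Suc n) $$ (i, k)"
      using prod[OF cA cB ik] AB ik by (simp add: MA_def MB_def)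
  qed (auto simp: MA_def MB_def)
  then have BA: "MB * MA = 1\<^sub>m (Suc n)" by (rule mat_mult_left_right_inverse[OF cA cB])
  show ?thesis
  proof (intro allI impI)
    fix i k assume ik: "i \<le> n" "k \<le> n"
    have "(MB * MA) $$ (i, k) = (\<Sum>j\<le>n. B i j * A j k)"
      using prod[OF cB cA ik] ik by (simp add: MA_def MB_def)
    moreover have "(MB * MA) $$ (i, k) = (if i = k then 1 else 0)" using BA ik by simp
    ultimately show "(\<Sum>j\<le>n. B i j * A j k) = (if i = k then 1 else 0)" by simp
  qed
qed

theorem lemma5p1:
  fixes F :: "'k::{finite,field} mpoly" and n :: nat
  assumes "n \<ge> 2"
    and "vars_in {..n} F"
    and "F \<noteq> 0"
    and "homogeneous (card (UNIV :: 'k set) + 2) F"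
    and "smooth_hypersurface n F"
    and "frobenius_nonclassical n F"
  shows "\<not> separated_variables n F"
proof
  assume "separated_variables n F"
  then obtain A m G H where inv: "Defs.invertible_mat n A" and mn: "m < n"
    and G: "vars_in {..m} G" and H: "vars_in {m<..n} H" and eq: "lin_change n A F = G + H"
    unfolding separated_variables_def by blast
  obtain B where AB: "\<forall>i\<le>n. \<forall>k\<le>n. (\<Sum>j\<le>n. A i j * B j k) = (if i = k then 1 else 0)"
    using inv unfolding Defs.invertible_mat_def by blast
  have BA: "\<forall>i\<le>n. \<forall>k\<le>n. (\<Sum>j\<le>n. B i j * A j k) = (if i = k then 1 else 0)"
    by (rule inv_comm[OF AB])
  define F' where "F' = lin_change n A F"
  have pureF': "ispure {..m} {m<..n} u" if u: "u \<in> ks F'" for u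
  proof -
    have "u \<in> ks G \<union> ks H" using u keys_add[of G H] unfolding F'_def eq by blast
    then show ?thesis using G H by (auto simp: ispure_def vars_in_def)
  qed
  have homF': "homogeneous (card (UNIV :: 'k set) + 2) F'"
    unfolding F'_def lin_change_ev by (rule hom_subst[OF assms(4) hom_sig])
  have fncF': "frobenius_nonclassical n F'"
    unfolding F'_def by (rule fnc_transfer[OF assms(2) assms(6)])
  obtain y :: "nat \<Rightarrow> 'k alg_closure" where y: "\<exists>i\<le>n. y i \<noteq> 0" "ev to_ac y F' = 0"
    "\<forall>j\<le>n. ev to_ac y (mp_pderiv j F') = 0"
    using singular_point[OF mn pureF' homF' fncF'] by blast
  have "\<not> smooth_hypersurface n F"
    by (rule smooth_transfer[OF assms(2) AB BA y(1)]) (use y in \<open>auto simp: F'_def\<close>)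
  then show False using assms(5) by contradiction
qed

end
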